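(* Let $\alpha_1,\dots,\alpha_K\in\mathbb R^d\setminus\{0\}$ be distinct and $\gamma_1,\dots,\gamma_M>0$ ($M\le K$). Then there is at most one vector $\hat\theta\in\mathbb R^d$ with the following properties: (i) $\alpha_k^{T}\hat\theta=\gamma_k$ for $k=1,\dots,M$; (ii) there exists $\{\alpha_{j_1},\dots,\alpha_{j_p}\}\subseteq\{\alpha_{M+1},\dots,\alpha_K\}$ such that (a) $\alpha_1,\dots,\alpha_M,\alpha_{j_1},\dots,\alpha_{j_p}$ are linearly independent; (b) $\hat\theta\in\mathrm{span}\{\alpha_1,\dots,\alpha_M,\alpha_{j_1},\dots,\alpha_{j_p}\}$ and in the expansion of $\hat\theta$ in this basis the coefficient of each $\alpha_{j_m}$, $m=1,\dots,p$, is negative; (c) $\alpha_{j_m}^{T}\hat\theta=0$ for $m=1,\dots,p$; (d) $\alpha^{T}\hat\theta<0$ for every $\alpha\in\{\alpha_{M+1},\dots,\alpha_K\}\setminus\{\alpha_{j_1},\dots,\alpha_{j_p}\}$. (Uniqueness holds even if different vectors use different subsets in (ii).) *)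

theory Defs
  imports "HOL-Analysis.Analysis"
begin

text \<open>Vectors alpha_1..alpha_K are indexed by nat, indices 1..K.\<close>

definition good_vector ::
  "(nat \<Rightarrow> 'a::euclidean_space) \<Rightarrow> (nat \<Rightarrow> real) \<Rightarrow> nat \<Rightarrow> nat \<Rightarrow> 'a \<Rightarrow> bool" where
  "good_vector \<alpha> \<gamma> M K \<theta> \<longleftrightarrow>
     (\<forall>k\<in>{1..M}. \<alpha> k \<bullet> \<theta> = \<gamma> k) \<and>
     (\<exists>J. J \<subseteq> {M+1..K} \<and>
        independent (\<alpha> ` ({1..M} \<union> J)) \<and>
        (\<exists>c. \<theta> = (\<Sum>i\<in>{1..M} \<union> J. c i *\<^sub>R \<alpha> i) \<and> (\<forall>j\<in>J. c j < 0)) \<and>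
        (\<forall>j\<in>J. \<alpha> j \<bullet> \<theta> = 0) \<and>
        (\<forall>k\<in>{M+1..K} - J. \<alpha> k \<bullet> \<theta> < 0))"

end

theory Submission
  imports Defs
begin

lemma key:
  assumes g1: "good_vector \<alpha> \<gamma> M K \<theta>1" and g2: "good_vector \<alpha> \<gamma> M K \<theta>2"
  shows "\<theta>1 \<bullet> (\<theta>2 - \<theta>1) \<ge> 0"
proof -
  from g1 obtain J c where J: "J \<subseteq> {M+1..K}"
    and th: "\<theta>1 = (\<Sum>i\<in>{1..M} \<union> J. c i *\<^sub>R \<alpha> i)" and cn: "\<forall>j\<in>J. c j < 0"
    and z: "\<forall>j\<in>J. \<alpha> j \<bullet> \<theta>1 = 0" and e1: "\<forall>k\<in>{1..M}. \<alpha> k \<bullet> \<theta>1 = \<gamma> k"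
    unfolding good_vector_def by blast
  from g2 obtain J2 where e2: "\<forall>k\<in>{1..M}. \<alpha> k \<bullet> \<theta>2 = \<gamma> k"
    and z2: "\<forall>j\<in>J2. \<alpha> j \<bullet> \<theta>2 = 0" and n2: "\<forall>k\<in>{M+1..K} - J2. \<alpha> k \<bullet> \<theta>2 < 0"
    unfolding good_vector_def by blast
  have le2: "\<forall>k\<in>{M+1..K}. \<alpha> k \<bullet> \<theta>2 \<le> 0"
  proof
    fix k assume k: "k \<in> {M+1..K}"
    show "\<alpha> k \<bullet> \<theta>2 \<le> 0"
    proof (cases "k \<in> J2")
      case True thus ?thesis using z2 by simp
    next
      case False thus ?thesis using n2 k by (simp add: less_imp_le)
    qed
  qed
  have "\<theta>1 \<bullet> (\<theta>2 - \<theta>1) = (\<Sum>i\<in>{1..M} \<union> J. c i * (\<alpha> i \<bullet> (\<theta>2 - \<theta>1)))"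
    by (simp add: th inner_sum_left)
  also have "\<dots> \<ge> 0"
  proof (rule sum_nonneg)
    fix i assume i: "i \<in> {1..M} \<union> J"
    show "0 \<le> c i * (\<alpha> i \<bullet> (\<theta>2 - \<theta>1))"
    proof (cases "i \<in> {1..M}")
      case True thus ?thesis using e1 e2 by (simp add: inner_diff_right)
    next
      case False
      hence "i \<in> J" using i by blast
      hence "c i < 0" "\<alpha> i \<bullet> \<theta>1 = 0" "\<alpha> i \<bullet> \<theta>2 \<le> 0" using cn z le2 J by auto
      thus ?thesis by (simp add: inner_diff_right mult_nonpos_nonpos)
    qed
  qed
  finally show ?thesis .
qed

theorem lemma3:
  fixes \<alpha> :: "nat \<Rightarrow> 'a::euclidean_space" and \<gamma> :: "nat \<Rightarrow> real" and M K :: nat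
  assumes "M \<le> K"
    and "inj_on \<alpha> {1..K}"
    and "\<And>k. k \<in> {1..K} \<Longrightarrow> \<alpha> k \<noteq> 0"
    and "\<And>k. k \<in> {1..M} \<Longrightarrow> \<gamma> k > 0"
  shows "\<forall>\<theta>1 \<theta>2. good_vector \<alpha> \<gamma> M K \<theta>1 \<and> good_vector \<alpha> \<gamma> M K \<theta>2 \<longrightarrow> \<theta>1 = \<theta>2"
proof (intro allI impI)
  fix \<theta>1 \<theta>2 :: 'a
  assume "good_vector \<alpha> \<gamma> M K \<theta>1 \<and> good_vector \<alpha> \<gamma> M K \<theta>2"
  hence a: "\<theta>1 \<bullet> (\<theta>2 - \<theta>1) \<ge> 0" and b: "\<theta>2 \<bullet> (\<theta>1 - \<theta>2) \<ge> 0" using key by blast+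
  have "(\<theta>1 - \<theta>2) \<bullet> (\<theta>1 - \<theta>2) = - (\<theta>1 \<bullet> (\<theta>2 - \<theta>1)) - \<theta>2 \<bullet> (\<theta>1 - \<theta>2)"
    by (simp add: inner_diff_left inner_diff_right inner_commute)
  with a b have "(\<theta>1 - \<theta>2) \<bullet> (\<theta>1 - \<theta>2) \<le> 0" by linarith
  moreover have "0 \<le> (\<theta>1 - \<theta>2) \<bullet> (\<theta>1 - \<theta>2)" by (rule inner_ge_zero)
  ultimately have "(\<theta>1 - \<theta>2) \<bullet> (\<theta>1 - \<theta>2) = 0" by linarith
  hence "\<theta>1 - \<theta>2 = 0" by (simp only: inner_eq_zero_iff)
  thus "\<theta>1 = \<theta>2" by simp
qed

end
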